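(* Let $S_g$ be a closed orientable surface and let $u,v$ be adjacent vertices of the finitary curve graph $\mathcal{C}^\dagger_{<\infty}(S_g)$, i.e. distinct essential simple closed curves with $u\cap v$ finite. Then $|u\cap v|\leq 1$ if and only if there is no essential simple closed curve contained in $u\cup v$ other than $u$ and $v$.
   Context: The finitary curve graph $\mathcal{C}^\dagger_{<\infty}(S)$ has as vertices the embedded simple closed essential curves in $S$ (actual curves, not isotopy classes), with distinct $u,v$ adjacent if and only if $u\cap v$ is finite. *)

theory Defs
  imports "HOL-Analysis.Analysis" "HOL-Homology.Homology"
begin

definition surface_2manifold :: "'a topology \<Rightarrow> bool" where
  "surface_2manifold X \<longleftrightarrow> Hausdorff_space X \<and>
     (\<forall>x \<in> topspace X. \<exists>U. openin X U \<and> x \<in> U \<and>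
        (subtopology X U) homeomorphic_space (euclidean :: (real^2) topology))"

text \<open>A closed orientable surface: compact connected 2-manifold without boundary
  whose top integral singular homology group is nontrivial (i.e. isomorphic to Z),
  which is the standard homological characterisation of orientability.\<close>
definition closed_orientable_surface :: "'a topology \<Rightarrow> bool" where
  "closed_orientable_surface X \<longleftrightarrow> surface_2manifold X \<and> compact_space X \<and>
     connected_space X \<and> \<not> trivial_group (homology_group 2 X)"

definition circle_top :: "(real^2) topology" where
  "circle_top = subtopology euclidean (sphere 0 1)"

text \<open>An embedded simple closed curve (an actual subset, not an isotopy class)
  which is essential, i.e. a parametrising embedding of the circle is not
  homotopic to a constant map.\<close>
definition essential_scc :: "'a topology \<Rightarrow> 'a set \<Rightarrow> bool" where
  "essential_scc X c \<longleftrightarrow>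
     (\<exists>f. embedding_map circle_top X f \<and> f ` (sphere 0 1) = c \<and>
          \<not> (\<exists>a. homotopic_with (\<lambda>_. True) circle_top X f (\<lambda>_. a)))"

end

theory Submission
  imports Defs
begin

lemma top_of_set_Times: "prod_topology (top_of_set A) (top_of_set B) = top_of_set (A \<times> B)"
  by (simp add: subtopology_Times euclidean_product_topology)

lemma ext_null:
  assumes E: "continuous_map (top_of_set (cball (0::real^2) 1)) X E"
  shows "homotopic_with (\<lambda>_. True) circle_top X E (\<lambda>_. E 0)"
proof -
  have "continuous_map (prod_topology (top_of_set {0..1}) circle_top) (top_of_set (cball 0 1)) (\<lambda>(t::real,x::real^2). (1-t) *\<^sub>R x)"
    unfolding circle_top_def top_of_set_Times continuous_map_subtopology_eu
  proof
    show "continuous_on ({0..1} \<times> sphere 0 1) (\<lambda>(t::real, x::real^2). (1 - t) *\<^sub>R x)"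
      by (auto intro!: continuous_intros simp: case_prod_unfold)
  qed (auto simp: abs_if)
  then have "continuous_map (prod_topology (top_of_set {0..1}) circle_top) X (E \<circ> (\<lambda>(t::real,x::real^2). (1-t) *\<^sub>R x))"
    using E continuous_map_compose by blast
  then show ?thesis
    unfolding homotopic_with_def by (intro exI[where x="E \<circ> (\<lambda>(t::real,x::real^2). (1-t) *\<^sub>R x)"]) auto
qed

lemma null_ext:
  assumes "homotopic_with (\<lambda>_. True) circle_top X e (\<lambda>_. a)"
  shows "\<exists>E. continuous_map (top_of_set (cball (0::real^2) 1)) X E \<and> (\<forall>x\<in>sphere 0 1. E x = e x)"
proof -
  obtain h where h: "continuous_map (prod_topology (top_of_set {0..1::real}) circle_top) X h"
    and h0: "\<And>x. h(0,x) = e x" and h1: "\<And>x. h(1,x) = a"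
    using assms unfolding homotopic_with_def by blast
  have ax: "(axis 1 1 :: real^2) \<in> sphere 0 1" by (simp add: norm_axis_1)
  have "(1::real, axis 1 1 :: real^2) \<in> topspace (prod_topology (top_of_set {0..1::real}) circle_top)"
    using ax by (simp add: circle_top_def)
  then have aX: "a \<in> topspace X"
    using continuous_map_image_subset_topspace[OF h] h1 by (metis image_subset_iff)
  have g: "continuous_map (top_of_set {x::real^2. x \<in> cball 0 1 \<and> 1/2 \<le> norm x})
             (prod_topology (top_of_set {0..1::real}) circle_top) (\<lambda>x. (2 - 2 * norm x, x /\<^sub>R norm x))"
    unfolding circle_top_def top_of_set_Times continuous_map_subtopology_eu
  proof
    show "continuous_on {x::real^2. x \<in> cball 0 1 \<and> 1/2 \<le> norm x} (\<lambda>x. (2 - 2 * norm x, x /\<^sub>R norm x))"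
      by (intro continuous_intros) auto
  qed (auto, subst left_inverse, auto)
  define E where "E x = (if norm x \<le> 1/2 then a else h(2 - 2 * norm x, x /\<^sub>R norm x))" for x :: "real^2"
  have "continuous_map (top_of_set (cball (0::real^2) 1)) X E"
    unfolding E_def
  proof (rule continuous_map_cases_le)
    show "continuous_map (top_of_set (cball (0::real^2) 1)) euclideanreal norm"
      by (simp add: continuous_on_norm_id)
    show "continuous_map (subtopology (top_of_set (cball (0::real^2) 1)) {x \<in> topspace (top_of_set (cball 0 1)). norm x \<le> 1 / 2}) X (\<lambda>x. a)"
      using aX by simp
    have "continuous_map (subtopology (top_of_set (cball (0::real^2) 1)) {x \<in> topspace (top_of_set (cball 0 1)). 1/2 \<le> norm x}) X (h \<circ> (\<lambda>x. (2 - 2 * norm x, x /\<^sub>R norm x)))"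
      using continuous_map_compose[OF g h] by (simp add: subtopology_subtopology Int_def)
    then show "continuous_map (subtopology (top_of_set (cball (0::real^2) 1)) {x \<in> topspace (top_of_set (cball 0 1)). 1/2 \<le> norm x}) X (\<lambda>x. h(2 - 2 * norm x, x /\<^sub>R norm x))"
      by (simp add: o_def)
    show "\<And>x. x \<in> topspace (top_of_set (cball (0::real^2) 1)) \<Longrightarrow> norm x = 1/2 \<Longrightarrow> a = h(2 - 2 * norm x, x /\<^sub>R norm x)"
    proof -
      fix x :: "real^2" assume "norm x = 1/2"
      then have "2 - 2 * norm x = 1" by simp
      then show "a = h(2 - 2 * norm x, x /\<^sub>R norm x)" by (simp add: h1)
    qed
  qed (rule continuous_map_const[THEN iffD2], simp)
  moreover have "\<forall>x\<in>sphere 0 1. E x = e x"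
    by (auto simp: E_def h0)
  ultimately show ?thesis by blast
qed

lemma norm_sgn_decomp: "x = norm x *\<^sub>R sgn (x::'b::real_normed_vector)"
  by (cases "x = 0") (simp_all add: sgn_div_norm)

lemma radial_bij:
  fixes R :: "'b::euclidean_space set"
  assumes "compact R" "convex R" "c \<in> interior R"
  shows "bij_betw (\<lambda>y. sgn (y - c)) (frontier R) (sphere 0 1)"
proof -
  have cR: "c \<notin> frontier R" using assms(3) by (simp add: frontier_def)
  have noless: False if y1: "y1 \<in> frontier R" and y2: "y2 \<in> frontier R"
      and eq: "sgn (y1 - c) = sgn (y2 - c)"
      and lt: "norm (y1 - c) < norm (y2 - c)" for y1 y2
  proof -
    have n1: "norm (y1 - c) > 0" using y1 cR by auto
    have n2: "norm (y2 - c) > 0" using y2 cR by auto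
    define u where "u = norm (y1 - c) / norm (y2 - c)"
    have u: "0 < u" "u < 1" using n1 n2 lt by (auto simp: u_def)
    have "y1 - c = norm (y1 - c) *\<^sub>R sgn (y2 - c)"
      using eq norm_sgn_decomp[of "y1 - c"] by simp
    also have "\<dots> = u *\<^sub>R (norm (y2 - c) *\<^sub>R sgn (y2 - c))"
      using n2 by (simp add: u_def)
    also have "\<dots> = u *\<^sub>R (y2 - c)"
      using norm_sgn_decomp[of "y2 - c"] by simp
    finally have "y1 = (1 - u) *\<^sub>R c + u *\<^sub>R y2"
      by (simp add: algebra_simps)
    then have "y1 \<in> open_segment c y2"
      using u y2 y1 cR by (auto simp: in_segment)
    moreover have "y2 \<in> closure R" using y2 by (simp add: frontier_def)
    ultimately have "y1 \<in> interior R"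
      using in_interior_closure_convex_segment[OF assms(2,3)] by blast
    then show False using y1 by (simp add: frontier_def)
  qed
  have inj: "inj_on (\<lambda>y. sgn (y - c)) (frontier R)"
  proof
    fix y1 y2 assume y1: "y1 \<in> frontier R" and y2: "y2 \<in> frontier R"
      and eq: "sgn (y1 - c) = sgn (y2 - c)"
    show "y1 = y2"
    proof (cases "norm (y1 - c)" "norm (y2 - c)" rule: linorder_cases)
      case less then show ?thesis by (meson eq noless y1 y2)
    next
      case greater then show ?thesis by (metis eq noless y1 y2)
    next
      case equal
      then have "y1 - c = y2 - c"
        using eq norm_sgn_decomp[of "y1 - c"] norm_sgn_decomp[of "y2 - c"] by metis
      then show ?thesis by simp
    qed
  qed
  have "(\<lambda>y. sgn (y - c)) ` frontier R = sphere 0 1"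
  proof
    show "(\<lambda>y. sgn (y - c)) ` frontier R \<subseteq> sphere 0 1"
      using cR by (auto simp: norm_sgn)
    show "sphere 0 1 \<subseteq> (\<lambda>y. sgn (y - c)) ` frontier R"
    proof
      fix w :: 'b assume w: "w \<in> sphere 0 1"
      then have "w \<noteq> 0" by auto
      then obtain d where d: "0 < d" "c + d *\<^sub>R w \<in> frontier R"
        using ray_to_frontier[OF compact_imp_bounded[OF assms(1)] assms(3)] by blast
      have "sgn ((c + d *\<^sub>R w) - c) = w"
        using d w by (simp add: sgn_scaleR sgn_div_norm)
      then show "w \<in> (\<lambda>y. sgn (y - c)) ` frontier R"
        using d by (metis image_eqI)
    qed
  qed
  then show ?thesis using inj by (simp add: bij_betw_def)
qed


lemma compact_circle_top: "compact_space circle_top"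
  unfolding circle_top_def
  by (rule compact_space_subtopology) (simp add: compactin_subtopology compact_sphere)

lemma half:
  fixes X :: "'a topology" and R :: "(real^2) set" and \<Phi> :: "real^2 \<Rightarrow> 'a"
  assumes Haus: "Hausdorff_space X" and R: "compact R" "convex R" "c \<in> interior R"
    and \<Phi>: "continuous_map (top_of_set (frontier R)) X \<Phi>" "inj_on \<Phi> (frontier R)"
  shows "\<exists>e. embedding_map circle_top X e \<and> e ` sphere 0 1 = \<Phi> ` frontier R \<and>
     ((\<exists>a. homotopic_with (\<lambda>_. True) circle_top X e (\<lambda>_. a)) \<longrightarrow>
        (\<exists>\<Psi>. continuous_map (top_of_set R) X \<Psi> \<and> (\<forall>x\<in>frontier R. \<Psi> x = \<Phi> x)))"
proof -
  have cR: "c \<notin> frontier R" using R(3) by (simp add: frontier_def)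
  have bij: "bij_betw (\<lambda>y. sgn (y - c)) (frontier R) (sphere 0 1)"
    by (rule radial_bij[OF R])
  have contsgn: "continuous_on (frontier R) (\<lambda>y. sgn (y - c))"
    using cR by (intro continuous_intros) auto
  obtain l where l: "homeomorphism (frontier R) (sphere 0 1) (\<lambda>y. sgn (y - c)) l"
    using homeomorphism_compact[OF compact_frontier[OF R(1)] contsgn]
      bij unfolding bij_betw_def by blast
  have lcont: "continuous_map circle_top (top_of_set (frontier R)) l"
    using l unfolding circle_top_def homeomorphism_def by auto
  define e where "e = \<Phi> \<circ> l"
  have econt: "continuous_map circle_top X e"
    unfolding e_def using continuous_map_compose[OF lcont \<Phi>(1)] .
  have einj: "inj_on e (sphere 0 1)"
    unfolding e_def using l \<Phi>(2)
    by (smt (verit, ccfv_SIG) comp_apply homeomorphism_def image_eqI inj_on_def)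
  have emb: "embedding_map circle_top X e"
    by (rule continuous_imp_embedding_map[OF econt compact_circle_top Haus])
       (use einj in \<open>simp add: circle_top_def\<close>)
  have eim: "e ` sphere 0 1 = \<Phi> ` frontier R"
  proof -
    have "l ` sphere 0 1 = frontier R" using l by (simp add: homeomorphism_def)
    then show ?thesis unfolding e_def by (metis image_comp)
  qed
  have ext: "\<exists>\<Psi>. continuous_map (top_of_set R) X \<Psi> \<and> (\<forall>x\<in>frontier R. \<Psi> x = \<Phi> x)"
    if hom: "homotopic_with (\<lambda>_. True) circle_top X e (\<lambda>_. a)" for a
  proof -
    obtain E where E: "continuous_map (top_of_set (cball (0::real^2) 1)) X E" "\<forall>x\<in>sphere 0 1. E x = e x"
      using null_ext[OF hom] by blast
    have clo: "closedin (top_of_set R) (frontier R)"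
      using R(1) by (intro closed_subset) (auto simp: frontier_subset_closed compact_imp_closed)
    have "(\<lambda>y. sgn (y - c)) ` frontier R \<subseteq> cball 0 1"
      using bij unfolding bij_betw_def by auto
    then obtain g where g: "continuous_on R g" "g ` R \<subseteq> cball 0 1" "\<And>x. x \<in> frontier R \<Longrightarrow> g x = sgn (x - c)"
      using Dugundji[OF convex_cball _ clo contsgn, of 0 1] by auto
    have gc: "continuous_map (top_of_set R) (top_of_set (cball 0 1)) g"
      using g by auto
    have "continuous_map (top_of_set R) X (E \<circ> g)"
      using continuous_map_compose[OF gc E(1)] .
    moreover have "\<forall>x\<in>frontier R. (E \<circ> g) x = \<Phi> x"
    proof
      fix x assume x: "x \<in> frontier R"
      have s: "sgn (x - c) \<in> sphere 0 1" using x bij unfolding bij_betw_def by auto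
      have "(E \<circ> g) x = e (sgn (x - c))" using g(3)[OF x] E(2) s by simp
      also have "\<dots> = \<Phi> (l (sgn (x - c)))" by (simp add: e_def)
      also have "\<dots> = \<Phi> x" using l x by (simp add: homeomorphism_def)
      finally show "(E \<circ> g) x = \<Phi> x" .
    qed
    ultimately show ?thesis by blast
  qed
  show ?thesis using emb eim ext by blast
qed


definition perp2 :: "real^2 \<Rightarrow> real^2" where
  "perp2 d = vector [-(d$2), d$1]"

lemma perp2_inner: "perp2 d \<bullet> d = 0"
  by (simp add: perp2_def inner_vec_def sum_2)

lemma perp2_zero: "perp2 d = 0 \<longleftrightarrow> d = 0"
  by (auto simp: perp2_def vec_eq_iff forall_2)

lemma perp2_norm: "norm (perp2 d) = norm d"
  by (simp add: perp2_def norm_eq_sqrt_inner inner_vec_def sum_2 algebra_simps)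

lemma perp2_parallel:
  assumes "perp2 d \<bullet> y = 0"
  shows "(d \<bullet> d) *\<^sub>R y = (y \<bullet> d) *\<^sub>R d"
proof -
  have e: "d$1 * y$2 = d$2 * y$1"
    using assms by (simp add: perp2_def inner_vec_def sum_2 algebra_simps)
  show ?thesis
    unfolding vec_eq_iff forall_2
    by (simp add: inner_vec_def sum_2 algebra_simps) (metis e mult.assoc mult.commute)
qed

lemma chord_norm:
  assumes "r1 \<in> sphere (0::real^2) 1" "r2 \<in> sphere 0 1"
  shows "norm (r1 + s *\<^sub>R (r2 - r1)) ^ 2 = 1 + s * (s - 1) * ((r2 - r1) \<bullet> (r2 - r1))"
proof -
  have n1: "r1 \<bullet> r1 = 1" "r2 \<bullet> r2 = 1"
    using assms by (simp_all add: dot_square_norm)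
  have "norm (r1 + s *\<^sub>R (r2 - r1)) ^ 2 = (r1 + s *\<^sub>R (r2 - r1)) \<bullet> (r1 + s *\<^sub>R (r2 - r1))"
    by (simp only: power2_norm_eq_inner)
  also have "\<dots> = 1 + s * (s - 1) * ((r2 - r1) \<bullet> (r2 - r1))"
    by (simp add: inner_add_left inner_add_right inner_diff_left inner_diff_right
        n1 inner_commute[of r2 r1] algebra_simps)
  finally show ?thesis .
qed


lemma cs_eq:
  fixes a b :: "real^2"
  assumes "norm a = 1" "b \<noteq> 0" "b \<bullet> a = norm b"
  shows "a = b /\<^sub>R norm b"
proof -
  have nb: "norm b > 0" using assms(2) by simp
  define x where "x = b /\<^sub>R norm b"
  have ax: "a \<bullet> x = 1" using assms nb by (simp add: x_def inner_commute)
  have xx: "x \<bullet> x = 1" using nb by (simp add: x_def dot_square_norm power2_eq_square)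
  have aa: "a \<bullet> a = 1" using assms by (simp add: dot_square_norm)
  have "(a - x) \<bullet> (a - x) = a \<bullet> a - 2 * (a \<bullet> x) + x \<bullet> x"
    by (simp add: inner_diff_left inner_diff_right inner_commute[of x a])
  then have "(a - x) \<bullet> (a - x) = 0" using ax xx aa by simp
  then show ?thesis by (simp add: x_def)
qed

lemma infinite_cap:
  fixes n w r :: "real^2"
  assumes w: "w \<in> sphere 0 1" "n \<bullet> w > k" and r: "r \<in> sphere 0 1" "\<not> n \<bullet> r > k"
  shows "infinite (sphere 0 1 \<inter> {x. n \<bullet> x > k})"
proof
  assume fin: "finite (sphere 0 1 \<inter> {x. n \<bullet> x > k})"
  have conn: "connected (sphere (0::real^2) 1)" by (rule connected_sphere) simp
  have op: "openin (top_of_set (sphere 0 1)) (sphere 0 1 \<inter> {x. n \<bullet> x > k})"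
    using open_halfspace_gt[of k n] by (simp add: openin_open_Int inf_commute)
  have cl: "closedin (top_of_set (sphere 0 1)) (sphere 0 1 \<inter> {x. n \<bullet> x > k})"
    using fin by (intro closed_subset) (auto simp: finite_imp_closed)
  have "sphere 0 1 \<inter> {x. n \<bullet> x > k} = {} \<or> sphere 0 1 \<inter> {x. n \<bullet> x > k} = sphere 0 1"
    using conn op cl unfolding connected_clopen by blast
  then show False using w r by blast
qed

locale chord =
  fixes r1 r2 :: "real^2"
  assumes r1: "r1 \<in> sphere 0 1" and r2: "r2 \<in> sphere 0 1" and neq: "r1 \<noteq> r2"
begin

definition "d = r2 - r1"
definition "n = perp2 d"
definition "k = n \<bullet> r1"
definition "tp x = ((x - r1) \<bullet> d) / (d \<bullet> d)"
definition "L = cball 0 1 \<inter> {x. n \<bullet> x = k}"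
definition "R1 = cball 0 1 \<inter> {x. n \<bullet> x \<ge> k}"
definition "R2 = cball 0 1 \<inter> {x. n \<bullet> x \<le> k}"

lemma d_nz: "d \<noteq> 0" using neq by (simp add: d_def)
lemma dd_pos: "d \<bullet> d > 0" using d_nz by simp
lemma n_nz: "n \<noteq> 0" using d_nz by (simp add: n_def perp2_zero)
lemma nd: "n \<bullet> d = 0" by (simp add: n_def perp2_inner)
lemma nr2: "n \<bullet> r2 = k"
proof -
  have "r2 = r1 + d" by (simp add: d_def)
  then have "n \<bullet> r2 = n \<bullet> r1 + n \<bullet> d" by (metis inner_add_right)
  then show ?thesis by (simp add: k_def nd)
qed

lemma tp_line: "tp (r1 + s *\<^sub>R d) = s"
  using dd_pos by (simp add: tp_def)

lemma line: assumes "n \<bullet> x = k" shows "x = r1 + tp x *\<^sub>R d"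
proof -
  have "perp2 d \<bullet> (x - r1) = 0" using assms by (simp add: n_def[symmetric] k_def inner_diff_right)
  then have "(d \<bullet> d) *\<^sub>R (x - r1) = ((x - r1) \<bullet> d) *\<^sub>R d" by (rule perp2_parallel)
  then have "x - r1 = tp x *\<^sub>R d"
    using dd_pos unfolding tp_def
    by (metis (no_types, lifting) divideR_right less_irrefl scaleR_scaleR divide_inverse_commute
        times_divide_eq_right mult.commute scaleR_left_commute)
  then show ?thesis by (simp add: algebra_simps)
qed

lemma on_line: "n \<bullet> (r1 + s *\<^sub>R d) = k"
  by (simp add: inner_add_right nd k_def)

lemma chord_norm2: "norm (r1 + s *\<^sub>R d) ^ 2 = 1 + s * (s - 1) * (d \<bullet> d)"
  unfolding d_def using chord_norm[OF r1 r2] .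

lemma L_param: assumes "x \<in> L" shows "0 \<le> tp x" "tp x \<le> 1" "x = r1 + tp x *\<^sub>R d"
proof -
  have x: "x = r1 + tp x *\<^sub>R d" using assms line by (auto simp: L_def)
  have "norm x ^ 2 \<le> 1" using assms by (auto simp: L_def abs_square_le_1)
  then have "tp x * (tp x - 1) * (d \<bullet> d) \<le> 0" using chord_norm2[of "tp x"] x by simp
  then have "tp x * (tp x - 1) \<le> 0" using dd_pos by (simp add: mult_le_0_iff)
  then show "0 \<le> tp x" "tp x \<le> 1" by (auto simp: mult_le_0_iff)
  show "x = r1 + tp x *\<^sub>R d" by (rule x)
qed

lemma L_sphere: assumes "x \<in> L" "x \<in> sphere 0 1" shows "tp x = 0 \<or> tp x = 1"
proof -
  have x: "x = r1 + tp x *\<^sub>R d" using L_param[OF assms(1)] by simp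
  have "norm x ^ 2 = 1" using assms by simp
  then have "tp x * (tp x - 1) * (d \<bullet> d) = 0" using chord_norm2[of "tp x"] x by simp
  then show ?thesis using dd_pos by auto
qed

lemma in_L: assumes "0 \<le> s" "s \<le> 1" shows "r1 + s *\<^sub>R d \<in> L"
proof -
  have "s * (s - 1) \<le> 0" using assms by (simp add: mult_nonneg_nonpos)
  then have "s * (s - 1) * (d \<bullet> d) \<le> 0"
    by (rule mult_nonpos_nonneg) (use dd_pos in auto)
  then have "norm (r1 + s *\<^sub>R d) ^ 2 \<le> 1" using chord_norm2[of s] by simp
  then have "norm (r1 + s *\<^sub>R d) \<le> 1" by (simp add: power_le_one_iff)
  then show ?thesis by (simp add: L_def on_line)
qed

lemma notin_sphere: assumes "0 < s" "s < 1" shows "r1 + s *\<^sub>R d \<notin> sphere 0 1"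
proof
  assume "r1 + s *\<^sub>R d \<in> sphere 0 1"
  then have "norm (r1 + s *\<^sub>R d) ^ 2 = 1" by simp
  then have "s * (s - 1) * (d \<bullet> d) = 0" using chord_norm2[of s] by simp
  then show False using assms dd_pos by auto
qed

lemma r1_eq: "r1 = r1 + 0 *\<^sub>R d" by simp
lemma r2_eq: "r2 = r1 + 1 *\<^sub>R d" by (simp add: d_def)

lemma k_lt: "k < norm n"
proof -
  have "k \<le> norm n" using norm_cauchy_schwarz[of n r1] r1 by (simp add: k_def)
  moreover have "k \<noteq> norm n"
  proof
    assume "k = norm n"
    then have "r1 = n /\<^sub>R norm n" "r2 = n /\<^sub>R norm n"
      using cs_eq[of r1 n] cs_eq[of r2 n] r1 r2 n_nz nr2 by (auto simp: k_def)
    then show False using neq by simp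
  qed
  ultimately show ?thesis by simp
qed

lemma k_gt: "- norm n < k"
proof -
  have "-k \<le> norm (-n)" using norm_cauchy_schwarz[of "-n" r1] r1 by (simp add: k_def)
  moreover have "-k \<noteq> norm (-n)"
  proof
    assume "-k = norm (-n)"
    then have "r1 = (-n) /\<^sub>R norm (-n)" "r2 = (-n) /\<^sub>R norm (-n)"
      using cs_eq[of r1 "-n"] cs_eq[of r2 "-n"] r1 r2 n_nz nr2 by (auto simp: k_def)
    then show False using neq by simp
  qed
  ultimately show ?thesis by simp
qed

definition "w = n /\<^sub>R norm n"
lemma w_sphere: "w \<in> sphere 0 1" "-w \<in> sphere 0 1" using n_nz by (auto simp: w_def)
lemma nw: "n \<bullet> w = norm n" using n_nz by (simp add: w_def dot_square_norm power2_eq_square)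

lemma infinite1: "infinite (sphere 0 1 \<inter> {x. n \<bullet> x > k})"
  using infinite_cap[where n=n and w=w and r=r1 and k=k] w_sphere nw k_lt r1 by (simp add: k_def)

lemma infinite2: "infinite (sphere 0 1 \<inter> {x. n \<bullet> x < k})"
proof -
  have "infinite (sphere 0 1 \<inter> {x. (-n) \<bullet> x > -k})"
    using infinite_cap[where n="-n" and w="-w" and r=r1 and k="-k"] w_sphere nw k_gt r1 by (simp add: k_def)
  then show ?thesis by simp
qed

definition "m = r1 + (1/2) *\<^sub>R d"
lemma m_norm: "norm m < 1"
proof -
  have "norm m ^ 2 = 1 + (1/2) * (1/2 - 1) * (d \<bullet> d)" using chord_norm2 by (simp add: m_def)
  also have "\<dots> < 1" using dd_pos by simp
  finally show ?thesis by (simp add: power_less_one_iff)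
qed

definition "eps = (1 - norm m) / 2"
lemma eps_pos: "eps > 0" using m_norm by (simp add: eps_def)

lemma c1_int: "m + eps *\<^sub>R w \<in> interior R1"
proof -
  have "norm (m + eps *\<^sub>R w) \<le> norm m + eps"
    using norm_triangle_ineq[of m "eps *\<^sub>R w"] w_sphere eps_pos by simp
  also have "\<dots> < 1" using m_norm unfolding eps_def by (simp add: field_simps)
  finally have "norm (m + eps *\<^sub>R w) < 1" .
  moreover have "n \<bullet> (m + eps *\<^sub>R w) > k"
    using eps_pos nw n_nz on_line[of "1/2"] by (simp add: m_def[symmetric] inner_add_right)
  ultimately show ?thesis using n_nz by (simp add: R1_def)
qed

lemma c2_int: "m - eps *\<^sub>R w \<in> interior R2"
proof -
  have "norm (m - eps *\<^sub>R w) \<le> norm m + eps"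
    using norm_triangle_ineq4[of m "eps *\<^sub>R w"] w_sphere eps_pos by simp
  also have "\<dots> < 1" using m_norm unfolding eps_def by (simp add: field_simps)
  finally have "norm (m - eps *\<^sub>R w) < 1" .
  moreover have "n \<bullet> (m - eps *\<^sub>R w) < k"
    using eps_pos nw n_nz on_line[of "1/2"] by (simp add: m_def[symmetric] inner_diff_right)
  ultimately show ?thesis using n_nz by (simp add: R2_def)
qed

lemma R1_props: "compact R1" "convex R1"
  by (auto simp: R1_def intro!: compact_Int_closed closed_halfspace_ge convex_Int convex_halfspace_ge)
lemma R2_props: "compact R2" "convex R2"
  by (auto simp: R2_def intro!: compact_Int_closed closed_halfspace_le convex_Int convex_halfspace_le)

lemma frontier_R1: "frontier R1 = (sphere 0 1 \<inter> {x. n \<bullet> x \<ge> k}) \<union> L"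
proof -
  have "closure R1 = R1" using R1_props by (simp add: compact_imp_closed)
  moreover have "interior R1 = ball 0 1 \<inter> {x. n \<bullet> x > k}" using n_nz by (simp add: R1_def)
  ultimately show ?thesis by (auto simp: frontier_def R1_def L_def)
qed

lemma frontier_R2: "frontier R2 = (sphere 0 1 \<inter> {x. n \<bullet> x \<le> k}) \<union> L"
proof -
  have "closure R2 = R2" using R2_props by (simp add: compact_imp_closed)
  moreover have "interior R2 = ball 0 1 \<inter> {x. n \<bullet> x < k}" using n_nz by (simp add: R2_def)
  ultimately show ?thesis by (auto simp: frontier_def R2_def L_def)
qed

end


lemma paste2:
  assumes A: "closedin X A" and B: "closedin X B" and AB: "topspace X \<subseteq> A \<union> B"
    and f: "continuous_map (subtopology X A) Y f" and g: "continuous_map (subtopology X B) Y g"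
    and fg: "\<And>x. x \<in> topspace X \<Longrightarrow> x \<in> A \<Longrightarrow> x \<in> B \<Longrightarrow> f x = g x"
  shows "continuous_map X Y (\<lambda>x. if x \<in> A then f x else g x)"
proof (rule pasting_lemma_closed[where I="{True, False}" and T="\<lambda>b. if b then A else B"
      and f="\<lambda>b. if b then f else g"])
  fix x assume "x \<in> topspace X"
  then show "\<exists>j. j \<in> {True, False} \<and> x \<in> (if j then A else B) \<and>
          (if x \<in> A then f x else g x) = (if j then f else g) x"
    using AB by (cases "x \<in> A") auto
qed (use A B f g fg in auto)

context chord begin

lemma L_closed: "closed L"
  by (simp add: L_def closed_Int closed_hyperplane)

lemma L_interior: assumes "y \<in> L" "y \<notin> sphere 0 1" shows "0 < tp y" "tp y < 1"
proof -
  have p: "0 \<le> tp y" "tp y \<le> 1" "y = r1 + tp y *\<^sub>R d" using L_param[OF assms(1)] by auto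
  have "tp y \<noteq> 0" using p(3) assms(2) r1 by auto
  moreover have "tp y \<noteq> 1" using p(3) assms(2) r2 by (auto simp: d_def)
  ultimately show "0 < tp y" "tp y < 1" using p by auto
qed

lemma key:
  fixes X :: "'a topology" and f :: "real^2 \<Rightarrow> 'a" and \<beta> :: "real \<Rightarrow> 'a"
  assumes Haus: "Hausdorff_space X"
    and f: "continuous_map circle_top X f" "inj_on f (sphere 0 1)"
    and \<beta>: "continuous_map (top_of_set {0..1}) X \<beta>" "inj_on \<beta> {0..1}"
    and e1: "f r1 = \<beta> 0" and e2: "f r2 = \<beta> 1"
    and avoid: "\<And>s. 0 < s \<Longrightarrow> s < 1 \<Longrightarrow> \<beta> s \<notin> f ` sphere 0 1"
    and finV: "finite {x \<in> sphere 0 1. f x \<in> V}"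
    and nonnull: "\<not> (\<exists>a. homotopic_with (\<lambda>_. True) circle_top X f (\<lambda>_. a))"
  shows "\<exists>e. embedding_map circle_top X e \<and> e ` sphere 0 1 \<subseteq> f ` sphere 0 1 \<union> \<beta> ` {0..1}
     \<and> \<beta> (1/2) \<in> e ` sphere 0 1 \<and> \<not> e ` sphere 0 1 \<subseteq> V
     \<and> \<not> (\<exists>a. homotopic_with (\<lambda>_. True) circle_top X e (\<lambda>_. a))"
proof -
  define \<Phi> where "\<Phi> x = (if x \<in> sphere 0 1 then f x else \<beta> (tp x))" for x
  define T where "T = sphere 0 1 \<union> L"
  have tpcont: "continuous_map (top_of_set L) (top_of_set {0..1}) tp"
  proof -
    have "continuous_on L tp" unfolding tp_def using d_nz by (intro continuous_intros) auto
    moreover have "tp \<in> L \<rightarrow> {0..1}" using L_param by auto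
    ultimately show ?thesis by simp
  qed
  have \<Phi>cont: "continuous_map (top_of_set T) X \<Phi>"
    unfolding \<Phi>_def
  proof (rule paste2)
    show "closedin (top_of_set T) (sphere 0 1)" by (rule closed_subset) (auto simp: T_def)
    show "closedin (top_of_set T) L" by (rule closed_subset) (auto simp: T_def L_closed)
    show "topspace (top_of_set T) \<subseteq> sphere 0 1 \<union> L" by (simp add: T_def)
    show "continuous_map (subtopology (top_of_set T) (sphere 0 1)) X f"
      using f(1) by (simp add: subtopology_subtopology T_def circle_top_def Int_absorb1)
    have "continuous_map (top_of_set L) X (\<beta> \<circ> tp)"
      using continuous_map_compose[OF tpcont \<beta>(1)] .
    then show "continuous_map (subtopology (top_of_set T) L) X (\<lambda>x. \<beta> (tp x))"
      by (simp add: subtopology_subtopology T_def Int_absorb1 o_def)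
  next
    fix x assume x: "x \<in> sphere 0 1" "x \<in> L"
    have p: "x = r1 + tp x *\<^sub>R d" using L_param[OF x(2)] by simp
    from L_sphere[OF x(2) x(1)] show "f x = \<beta> (tp x)"
    proof
      assume "tp x = 0" then show ?thesis using p e1 by simp
    next
      assume "tp x = 1" then show ?thesis using p e2 by (simp add: d_def)
    qed
  qed
  have \<Phi>inj: "inj_on \<Phi> T"
  proof
    fix x y assume x: "x \<in> T" and y: "y \<in> T" and eq: "\<Phi> x = \<Phi> y"
    have cross: False if a: "a \<in> sphere 0 1" and b: "b \<in> L" "b \<notin> sphere 0 1" and ab: "f a = \<beta> (tp b)" for a b
      using avoid[OF L_interior[OF b]] a ab by (metis image_eqI)
    show "x = y"
    proof (cases "x \<in> sphere 0 1"; cases "y \<in> sphere 0 1")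
      assume "x \<in> sphere 0 1" "y \<in> sphere 0 1"
      then show ?thesis using eq f(2) by (simp add: \<Phi>_def inj_on_def)
    next
      assume "x \<in> sphere 0 1" "y \<notin> sphere 0 1"
      then show ?thesis using eq cross[of x y] y by (auto simp: \<Phi>_def T_def)
    next
      assume "x \<notin> sphere 0 1" "y \<in> sphere 0 1"
      then show ?thesis using eq cross[of y x] x by (auto simp: \<Phi>_def T_def)
    next
      assume xs: "x \<notin> sphere 0 1" and ys: "y \<notin> sphere 0 1"
      then have xL: "x \<in> L" and yL: "y \<in> L" using x y by (auto simp: T_def)
      have "\<beta> (tp x) = \<beta> (tp y)" using eq xs ys by (simp add: \<Phi>_def)
      then have "tp x = tp y" using \<beta>(2) L_param[OF xL] L_param[OF yL] by (auto simp: inj_on_def)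
      then show ?thesis using L_param(3)[OF xL] L_param(3)[OF yL] by metis
    qed
  qed
  have \<Phi>im: "\<Phi> ` T \<subseteq> f ` sphere 0 1 \<union> \<beta> ` {0..1}"
    using L_param by (auto simp: \<Phi>_def T_def)
  have mT: "m \<in> L" "m \<notin> sphere 0 1" "tp m = 1/2"
    using in_L[of "1/2"] notin_sphere[of "1/2"] tp_line[of "1/2"] by (auto simp: m_def)
  have \<Phi>m: "\<Phi> m = \<beta> (1/2)" using mT(2) unfolding \<Phi>_def mT(3)[symmetric] by simp
  have fR1: "frontier R1 \<subseteq> T" and fR2: "frontier R2 \<subseteq> T"
    using frontier_R1 frontier_R2 by (auto simp: T_def)
  have cont1: "continuous_map (top_of_set (frontier R1)) X \<Phi>"
    using continuous_map_from_subtopology[OF \<Phi>cont, of "frontier R1"] fR1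
    by (simp add: subtopology_subtopology Int_absorb1 inf.absorb2)
  have cont2: "continuous_map (top_of_set (frontier R2)) X \<Phi>"
    using continuous_map_from_subtopology[OF \<Phi>cont, of "frontier R2"] fR2
    by (simp add: subtopology_subtopology Int_absorb1 inf.absorb2)
  obtain g1 where g1: "embedding_map circle_top X g1" "g1 ` sphere 0 1 = \<Phi> ` frontier R1"
    "(\<exists>a. homotopic_with (\<lambda>_. True) circle_top X g1 (\<lambda>_. a)) \<longrightarrow>
        (\<exists>\<Psi>. continuous_map (top_of_set R1) X \<Psi> \<and> (\<forall>x\<in>frontier R1. \<Psi> x = \<Phi> x))"
    using half[OF Haus R1_props c1_int cont1 inj_on_subset[OF \<Phi>inj fR1]] by blast
  obtain g2 where g2: "embedding_map circle_top X g2" "g2 ` sphere 0 1 = \<Phi> ` frontier R2"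
    "(\<exists>a. homotopic_with (\<lambda>_. True) circle_top X g2 (\<lambda>_. a)) \<longrightarrow>
        (\<exists>\<Psi>. continuous_map (top_of_set R2) X \<Psi> \<and> (\<forall>x\<in>frontier R2. \<Psi> x = \<Phi> x))"
    using half[OF Haus R2_props c2_int cont2 inj_on_subset[OF \<Phi>inj fR2]] by blast
  have props1: "g1 ` sphere 0 1 \<subseteq> f ` sphere 0 1 \<union> \<beta> ` {0..1} \<and> \<beta> (1/2) \<in> g1 ` sphere 0 1 \<and> \<not> g1 ` sphere 0 1 \<subseteq> V"
  proof (intro conjI)
    show "g1 ` sphere 0 1 \<subseteq> f ` sphere 0 1 \<union> \<beta> ` {0..1}" using g1(2) fR1 \<Phi>im by blast
    show "\<beta> (1/2) \<in> g1 ` sphere 0 1" using g1(2) mT \<Phi>m frontier_R1 by (metis UnI2 image_eqI)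
    obtain x where x: "x \<in> sphere 0 1" "n \<bullet> x > k" "f x \<notin> V"
      using infinite1 finV
      by (metis (mono_tags, lifting) Int_Collect finite_subset mem_Collect_eq subsetI)
    have "x \<in> frontier R1" using x frontier_R1 by auto
    then show "\<not> g1 ` sphere 0 1 \<subseteq> V" using g1(2) x by (force simp: \<Phi>_def)
  qed
  have props2: "g2 ` sphere 0 1 \<subseteq> f ` sphere 0 1 \<union> \<beta> ` {0..1} \<and> \<beta> (1/2) \<in> g2 ` sphere 0 1 \<and> \<not> g2 ` sphere 0 1 \<subseteq> V"
  proof (intro conjI)
    show "g2 ` sphere 0 1 \<subseteq> f ` sphere 0 1 \<union> \<beta> ` {0..1}" using g2(2) fR2 \<Phi>im by blast
    show "\<beta> (1/2) \<in> g2 ` sphere 0 1" using g2(2) mT \<Phi>m frontier_R2 by (metis UnI2 image_eqI)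
    obtain x where x: "x \<in> sphere 0 1" "n \<bullet> x < k" "f x \<notin> V"
      using infinite2 finV
      by (metis (mono_tags, lifting) Int_Collect finite_subset mem_Collect_eq subsetI)
    have "x \<in> frontier R2" using x frontier_R2 by auto
    then show "\<not> g2 ` sphere 0 1 \<subseteq> V" using g2(2) x by (force simp: \<Phi>_def)
  qed
  have "\<not> ((\<exists>a. homotopic_with (\<lambda>_. True) circle_top X g1 (\<lambda>_. a)) \<and>
           (\<exists>a. homotopic_with (\<lambda>_. True) circle_top X g2 (\<lambda>_. a)))"
  proof
    assume "(\<exists>a. homotopic_with (\<lambda>_. True) circle_top X g1 (\<lambda>_. a)) \<and>
           (\<exists>a. homotopic_with (\<lambda>_. True) circle_top X g2 (\<lambda>_. a))"
    then obtain \<Psi>1 \<Psi>2 where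
      P1: "continuous_map (top_of_set R1) X \<Psi>1" "\<forall>x\<in>frontier R1. \<Psi>1 x = \<Phi> x" and
      P2: "continuous_map (top_of_set R2) X \<Psi>2" "\<forall>x\<in>frontier R2. \<Psi>2 x = \<Phi> x"
      using g1(3) g2(3) by blast
    define \<Psi> where "\<Psi> x = (if n \<bullet> x \<le> k then \<Psi>2 x else \<Psi>1 x)" for x
    have "continuous_map (top_of_set (cball 0 1)) X \<Psi>"
      unfolding \<Psi>_def
    proof (rule continuous_map_cases_le)
      show "continuous_map (top_of_set (cball 0 1)) euclideanreal (\<lambda>x. n \<bullet> x)"
        by (simp add: continuous_on_inner continuous_on_const continuous_on_id)
      show "continuous_map (top_of_set (cball 0 1)) euclideanreal (\<lambda>x. k)" by simp
      have "subtopology (top_of_set (cball 0 1)) {x \<in> topspace (top_of_set (cball (0::real^2) 1)). n \<bullet> x \<le> k} = top_of_set R2"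
        by (simp add: subtopology_subtopology R2_def) (rule arg_cong[where f="top_of_set"], auto)
      then show "continuous_map (subtopology (top_of_set (cball 0 1)) {x \<in> topspace (top_of_set (cball 0 1)). n \<bullet> x \<le> k}) X \<Psi>2"
        using P2(1) by simp
      have "subtopology (top_of_set (cball 0 1)) {x \<in> topspace (top_of_set (cball (0::real^2) 1)). k \<le> n \<bullet> x} = top_of_set R1"
        by (simp add: subtopology_subtopology R1_def) (rule arg_cong[where f="top_of_set"], auto)
      then show "continuous_map (subtopology (top_of_set (cball 0 1)) {x \<in> topspace (top_of_set (cball 0 1)). k \<le> n \<bullet> x}) X \<Psi>1"
        using P1(1) by simp
    next
      fix x assume "x \<in> topspace (top_of_set (cball (0::real^2) 1))" "n \<bullet> x = k"
      then have "x \<in> L" by (simp add: L_def)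
      then show "\<Psi>2 x = \<Psi>1 x" using P1(2) P2(2) frontier_R1 frontier_R2 by auto
    qed
    then have hom: "homotopic_with (\<lambda>_. True) circle_top X \<Psi> (\<lambda>_. \<Psi> 0)" by (rule ext_null)
    have f\<Psi>: "\<And>x. x \<in> topspace circle_top \<Longrightarrow> f x = \<Psi> x"
    proof -
      fix x assume "x \<in> topspace circle_top"
      then have x: "x \<in> sphere 0 1" by (simp add: circle_top_def)
      show "f x = \<Psi> x"
      proof (cases "n \<bullet> x \<le> k")
        case True
        then have "x \<in> frontier R2" using x frontier_R2 by auto
        then show ?thesis using True P2(2) x by (simp add: \<Psi>_def \<Phi>_def)
      next
        case False
        then have "x \<in> frontier R1" using x frontier_R1 by auto
        then show ?thesis using False P1(2) x by (simp add: \<Psi>_def \<Phi>_def)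
      qed
    qed
    have "homotopic_with (\<lambda>_. True) circle_top X f (\<lambda>_. \<Psi> 0)"
      by (rule homotopic_with_eq[OF hom f\<Psi>]) auto
    then show False using nonnull by blast
  qed
  then show ?thesis using g1(1) g2(1) props1 props2 by blast
qed

end



definition e2 :: "real \<Rightarrow> real^2" where
  "e2 t = cos t *\<^sub>R axis 1 1 + sin t *\<^sub>R axis 2 1"

lemma e2_comp: "e2 t $ 1 = cos t" "e2 t $ 2 = sin t"
  by (simp_all add: e2_def axis_def)

lemma norm2_sq: "norm (x::real^2) ^ 2 = x$1 ^ 2 + x$2 ^ 2"
  unfolding power2_norm_eq_inner by (simp add: inner_vec_def sum_2 power2_eq_square)

lemma e2_norm: "norm (e2 t) = 1"
proof -
  have "norm (e2 t) ^ 2 = 1" by (simp add: norm2_sq e2_comp)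
  then have "sqrt (norm (e2 t) ^ 2) = 1" by simp
  then show ?thesis by simp
qed

lemma e2_eq_iff: "e2 x = e2 y \<longleftrightarrow> (\<exists>n::int. x = y + 2 * pi * n)"
proof -
  have "e2 x = e2 y \<longleftrightarrow> cos x = cos y \<and> sin x = sin y"
    by (auto simp: vec_eq_iff forall_2 e2_comp)
  also have "\<dots> \<longleftrightarrow> sin x = sin y \<and> cos x = cos y" by blast
  also have "\<dots> \<longleftrightarrow> (\<exists>n::int. x = y + 2 * pi * n)" by (rule sin_cos_eq_iff)
  finally show ?thesis .
qed

lemma e2_surj:
  assumes "norm (x::real^2) = 1"
  obtains t where "0 \<le> t" "t < 2 * pi" "x = e2 t"
proof -
  have "x$1 ^ 2 + x$2 ^ 2 = 1" using assms norm2_sq[of x] by simp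
  then obtain t where "0 \<le> t" "t < 2 * pi" "x$1 = cos t" "x$2 = sin t"
    by (rule sincos_total_2pi)
  moreover have "x = e2 t"
    using calculation by (auto simp: vec_eq_iff forall_2 e2_comp)
  ultimately show ?thesis using that by blast
qed


lemma e2_periodic: "e2 (t + 2 * pi) = e2 t"
  by (simp add: e2_def)

lemma e2_inj_small:
  assumes "e2 x = e2 y" "\<bar>x - y\<bar> < 2 * pi"
  shows "x = y"
proof -
  obtain n :: int where n: "x = y + 2 * pi * n" using assms(1) e2_eq_iff by blast
  then have "\<bar>2 * pi * n\<bar> < 2 * pi" using assms(2) by simp
  then have "\<bar>real_of_int n\<bar> < 1" by (simp add: abs_mult)
  then have "n = 0" by linarith
  then show ?thesis using n by simp
qed


lemma arc_exists:
  assumes G: "finite G" "G \<subseteq> sphere (0::real^2) 1" and q: "q1 \<in> G" "q2 \<in> G" "q1 \<noteq> q2"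
  shows "\<exists>\<gamma>::real \<Rightarrow> real^2. continuous_on {0..1} \<gamma> \<and> \<gamma> ` {0..1} \<subseteq> sphere 0 1 \<and> inj_on \<gamma> {0..1}
            \<and> \<gamma> 0 \<in> G \<and> \<gamma> 1 \<in> G \<and> (\<forall>s. 0 < s \<and> s < 1 \<longrightarrow> \<gamma> s \<notin> G)"
proof -
  obtain t1 where t1: "0 \<le> t1" "t1 < 2 * pi" "q1 = e2 t1" using G q by (metis e2_surj mem_sphere_0 subsetD)
  obtain t2 where t2: "0 \<le> t2" "t2 < 2 * pi" "q2 = e2 t2" using G q by (metis e2_surj mem_sphere_0 subsetD)
  define A where "A = {a. 0 < a \<and> a < 2 * pi \<and> e2 (t1 + a) \<in> G}"
  have injA: "inj_on (\<lambda>a. e2 (t1 + a)) A"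
  proof (rule inj_onI)
    fix x y assume "x \<in> A" "y \<in> A" "e2 (t1 + x) = e2 (t1 + y)"
    moreover have "\<bar>(t1 + x) - (t1 + y)\<bar> < 2 * pi" using \<open>x \<in> A\<close> \<open>y \<in> A\<close> unfolding A_def by auto
    ultimately have "t1 + x = t1 + y" using e2_inj_small by blast
    then show "x = y" by simp
  qed
  have finA: "finite A"
    by (rule inj_on_finite[OF injA _ G(1)]) (auto simp: A_def)
  have "A \<noteq> {}"
  proof (cases "t1 < t2")
    case True
    then have "t2 - t1 \<in> A" using t1 t2 q by (auto simp: A_def)
    then show ?thesis by blast
  next
    case False
    have "t1 \<noteq> t2" using q t1 t2 by auto
    have "e2 (t1 + (t2 - t1 + 2 * pi)) = q2" using e2_periodic[of t2] t2 by simp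
    then have "t2 - t1 + 2 * pi \<in> A" using False \<open>t1 \<noteq> t2\<close> t1 t2 q unfolding A_def by auto
    then show ?thesis by blast
  qed
  define a where "a = Min A"
  have aA: "a \<in> A" using finA \<open>A \<noteq> {}\<close> by (simp add: a_def)
  have amin: "\<And>b. b \<in> A \<Longrightarrow> a \<le> b" using finA by (simp add: a_def)
  have a: "0 < a" "a < 2 * pi" "e2 (t1 + a) \<in> G" using aA by (auto simp: A_def)
  define \<gamma> where "\<gamma> s = e2 (t1 + s * a)" for s
  have "continuous_on {0..1} \<gamma>" unfolding \<gamma>_def e2_def by (intro continuous_intros)
  moreover have "\<gamma> ` {0..1} \<subseteq> sphere 0 1" by (auto simp: \<gamma>_def e2_norm)
  moreover have "inj_on \<gamma> {0..1}"
  proof (rule inj_onI)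
    fix x y :: real assume x: "x \<in> {0..1}" and y: "y \<in> {0..1}" and eq: "\<gamma> x = \<gamma> y"
    have "\<bar>x * a - y * a\<bar> \<le> a"
    proof -
      have "\<bar>x - y\<bar> \<le> 1" using x y by auto
      then have "\<bar>x - y\<bar> * a \<le> 1 * a" using a(1) by (intro mult_right_mono) auto
      then show ?thesis using a(1) by (simp add: abs_mult left_diff_distrib[symmetric])
    qed
    moreover have "(t1 + x * a) - (t1 + y * a) = x * a - y * a" by simp
    ultimately have "\<bar>(t1 + x * a) - (t1 + y * a)\<bar> < 2 * pi" using a(2) by linarith
    moreover have "e2 (t1 + x * a) = e2 (t1 + y * a)" using eq by (simp add: \<gamma>_def)
    ultimately have "t1 + x * a = t1 + y * a" using e2_inj_small by blast
    then show "x = y" using a(1) by simp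
  qed
  moreover have "\<gamma> 0 \<in> G" using q t1 by (simp add: \<gamma>_def)
  moreover have "\<gamma> 1 \<in> G" using a by (simp add: \<gamma>_def)
  moreover have "\<forall>s. 0 < s \<and> s < 1 \<longrightarrow> \<gamma> s \<notin> G"
  proof (intro allI impI notI)
    fix s assume s: "0 < s \<and> s < 1" and "\<gamma> s \<in> G"
    have "s * a < a" using mult_strict_right_mono[of s 1 a] s a(1) by simp
    then have "s * a < 2 * pi" using a(2) by linarith
    then have "s * a \<in> A" using a(1,2) s \<open>\<gamma> s \<in> G\<close> unfolding A_def \<gamma>_def by auto
    then have "a \<le> s * a" by (rule amin)
    then show False using s a(1) by simp
  qed
  ultimately show ?thesis by - (rule exI[of _ \<gamma>], intro conjI)
qed


lemma circle_self:
  fixes k :: "real^2 \<Rightarrow> real^2"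
  assumes k: "continuous_on (sphere (0::real^2) 1) k" "inj_on k (sphere 0 1)" "k ` sphere 0 1 \<subseteq> sphere 0 1"
  shows "k ` sphere 0 1 = sphere 0 1"
proof (rule ccontr)
  assume "k ` sphere 0 1 \<noteq> sphere 0 1"
  then obtain p where p: "p \<in> sphere (0::real^2) 1" "p \<notin> k ` sphere 0 1" using k(3) by blast
  have "(sphere (0::real^2) 1 - {p}) homeomorphic (UNIV :: real set)"
    by (rule homeomorphic_punctured_sphere_affine) (use p in auto)
  then obtain h :: "real^2 \<Rightarrow> real" and h' where h: "homeomorphism (sphere 0 1 - {p}) UNIV h h'"
    unfolding homeomorphic_def by blast
  have sub: "k ` sphere 0 1 \<subseteq> sphere 0 1 - {p}" using k(3) p by blast
  have "continuous_on (k ` sphere 0 1) h" by (rule continuous_on_subset[OF homeomorphism_cont1[OF h] sub])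
  then have "continuous_on (sphere 0 1) (h \<circ> k)" by (rule continuous_on_compose[OF k(1)])
  moreover have "inj_on (h \<circ> k) (sphere 0 1)"
  proof (rule comp_inj_on[OF k(2)])
    show "inj_on h (k ` sphere 0 1)"
    proof (rule inj_onI)
      fix x y assume x: "x \<in> k ` sphere 0 1" and y: "y \<in> k ` sphere 0 1" and "h x = h y"
      then have "h' (h x) = h' (h y)" by simp
      moreover have "h' (h x) = x" using homeomorphism_apply1[OF h] x sub by blast
      moreover have "h' (h y) = y" using homeomorphism_apply1[OF h] y sub by blast
      ultimately show "x = y" by simp
    qed
  qed
  ultimately have "DIM(real^2) \<le> DIM(real)"
    by (intro no_embedding_sphere_lowdim[of 0 1]) auto
  then show False by simp
qed

lemma emb_basic:
  assumes "embedding_map circle_top X f"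
  shows "continuous_map circle_top X f" "inj_on f (sphere 0 1)"
  using assms unfolding embedding_map_def
  by (auto dest: homeomorphic_imp_continuous_map homeomorphic_imp_injective_map
      simp: continuous_map_in_subtopology circle_top_def)

lemma circle_sub:
  assumes e: "embedding_map circle_top X e" and f: "embedding_map circle_top X f"
    and sub: "e ` sphere 0 1 \<subseteq> f ` sphere 0 1"
  shows "e ` sphere 0 1 = f ` sphere 0 1"
proof -
  obtain g where g: "homeomorphic_maps circle_top (subtopology X (f ` sphere 0 1)) f g"
    using f unfolding embedding_map_def homeomorphic_map_maps by (auto simp: circle_top_def)
  have gc: "continuous_map (subtopology X (f ` sphere 0 1)) circle_top g"
    and gf: "\<And>x. x \<in> sphere 0 1 \<Longrightarrow> g (f x) = x"
    and fg: "\<And>y. y \<in> topspace X \<Longrightarrow> y \<in> f ` sphere 0 1 \<Longrightarrow> f (g y) = y"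
    using g by (auto simp: homeomorphic_maps_def circle_top_def)
  have ec: "continuous_map circle_top (subtopology X (f ` sphere 0 1)) e"
    using emb_basic(1)[OF e] sub by (auto simp: continuous_map_in_subtopology circle_top_def)
  have eX: "\<And>x. x \<in> sphere 0 1 \<Longrightarrow> e x \<in> topspace X"
    using emb_basic(1)[OF e] by (auto simp: continuous_map_def circle_top_def)
  have kc: "continuous_map circle_top circle_top (g \<circ> e)"
    using continuous_map_compose[OF ec gc] .
  then have k1: "continuous_on (sphere 0 1) (g \<circ> e)" and k3: "(g \<circ> e) ` sphere 0 1 \<subseteq> sphere 0 1"
    by (auto simp: circle_top_def)
  have k2: "inj_on (g \<circ> e) (sphere 0 1)"
  proof (rule inj_onI)
    fix x y assume x: "x \<in> sphere 0 1" and y: "y \<in> sphere 0 1" and "(g \<circ> e) x = (g \<circ> e) y"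
    then have "f (g (e x)) = f (g (e y))" by simp
    then have "e x = e y" using fg eX x y sub by (metis image_subset_iff)
    then show "x = y" using emb_basic(2)[OF e] x y by (auto simp: inj_on_def)
  qed
  have surj: "(g \<circ> e) ` sphere 0 1 = sphere 0 1" by (rule circle_self[OF k1 k2 k3])
  show ?thesis
  proof
    show "f ` sphere 0 1 \<subseteq> e ` sphere 0 1"
    proof
      fix y assume "y \<in> f ` sphere 0 1"
      then obtain s where s: "s \<in> sphere 0 1" "y = f s" by blast
      then obtain t where t: "t \<in> sphere 0 1" "s = g (e t)" using surj by force
      have "f (g (e t)) = e t" using fg eX t sub by (metis image_subset_iff)
      then show "y \<in> e ` sphere 0 1" using s t by auto
    qed
  qed (rule sub)
qed

lemma conn_punct:
  assumes "finite F" "card F \<le> 1"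
  shows "connected (sphere (0::real^2) 1 - F)"
proof -
  have "F = {} \<or> (\<exists>p. F = {p})"
    using assms by (metis card_0_eq card_1_singletonE le_eq_less_or_eq less_one)
  then show ?thesis
  proof
    assume "F = {}" then show ?thesis by (simp add: connected_sphere)
  next
    assume "\<exists>p. F = {p}"
    then obtain p where p: "F = {p}" by blast
    show ?thesis
    proof (cases "p \<in> sphere (0::real^2) 1")
      case True
      have "(sphere (0::real^2) 1 - {p}) homeomorphic (UNIV :: real set)"
        by (rule homeomorphic_punctured_sphere_affine) (use True in auto)
      then show ?thesis using p homeomorphic_connectedness connected_UNIV by blast
    next
      case False
      then have "sphere 0 1 - F = sphere 0 1" using p by auto
      then show ?thesis by (simp add: connected_sphere)
    qed
  qed
qed

lemma circle_closed:
  assumes "Hausdorff_space X" "continuous_map circle_top X f"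
  shows "closedin X (f ` sphere 0 1)"
proof -
  have "compactin circle_top (sphere 0 1)"
    using compact_circle_top by (simp add: compact_space_def circle_top_def)
  then have "compactin X (f ` sphere 0 1)" using image_compactin assms(2) by blast
  then show ?thesis using compactin_imp_closedin assms(1) by blast
qed

lemma essential_unfold:
  assumes "essential_scc X u"
  obtains f where "embedding_map circle_top X f" "f ` sphere 0 1 = u"
    "continuous_map circle_top X f" "inj_on f (sphere 0 1)"
    "\<not> (\<exists>a. homotopic_with (\<lambda>_. True) circle_top X f (\<lambda>_. a))"
  using assms emb_basic unfolding essential_scc_def by blast

theorem lemma6p3:
  fixes X :: "'a topology" and u v :: "'a set"
  assumes "closed_orientable_surface X"
    and "essential_scc X u" and "essential_scc X v"
    and "u \<noteq> v" and "finite (u \<inter> v)"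
  shows "card (u \<inter> v) \<le> 1 \<longleftrightarrow>
         (\<forall>c. essential_scc X c \<and> c \<subseteq> u \<union> v \<longrightarrow> c = u \<or> c = v)"
proof -
  have Haus: "Hausdorff_space X"
    using assms(1) by (simp add: closed_orientable_surface_def surface_2manifold_def)
  obtain f where f: "embedding_map circle_top X f" "f ` sphere 0 1 = u"
    "continuous_map circle_top X f" "inj_on f (sphere 0 1)"
    "\<not> (\<exists>a. homotopic_with (\<lambda>_. True) circle_top X f (\<lambda>_. a))"
    using essential_unfold[OF assms(2)] by blast
  obtain g where g: "embedding_map circle_top X g" "g ` sphere 0 1 = v"
    "continuous_map circle_top X g" "inj_on g (sphere 0 1)"
    "\<not> (\<exists>a. homotopic_with (\<lambda>_. True) circle_top X g (\<lambda>_. a))"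
    using essential_unfold[OF assms(3)] by blast
  have uclosed: "closedin X u" using circle_closed[OF Haus f(3)] f(2) by simp
  have vclosed: "closedin X v" using circle_closed[OF Haus g(3)] g(2) by simp
  show ?thesis
  proof
    assume card1: "card (u \<inter> v) \<le> 1"
    show "\<forall>c. essential_scc X c \<and> c \<subseteq> u \<union> v \<longrightarrow> c = u \<or> c = v"
    proof (intro allI impI)
      fix c assume c: "essential_scc X c \<and> c \<subseteq> u \<union> v"
      obtain e where e: "embedding_map circle_top X e" "e ` sphere 0 1 = c"
        "continuous_map circle_top X e" "inj_on e (sphere 0 1)"
        using essential_unfold[of X c] c by blast
      show "c = u \<or> c = v"
      proof (cases "c \<subseteq> u")
        case True
        then show ?thesis using circle_sub[OF e(1) f(1)] e(2) f(2) by simp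
      next
        case notu: False
        show ?thesis
        proof (cases "c \<subseteq> v")
          case True
          then show ?thesis using circle_sub[OF e(1) g(1)] e(2) g(2) by simp
        next
          case notv: False
          obtain x where x: "x \<in> c" "x \<notin> u" using notu by blast
          obtain y where y: "y \<in> c" "y \<notin> v" using notv by blast
          define F where "F = {s \<in> sphere 0 1. e s \<in> u \<inter> v}"
          have injF: "inj_on e F" by (rule inj_on_subset[OF e(4)]) (auto simp: F_def)
          have imF: "e ` F \<subseteq> u \<inter> v" by (auto simp: F_def)
          have finF: "finite F" by (rule inj_on_finite[OF injF imF assms(5)])
          have "card F \<le> card (u \<inter> v)" by (rule card_inj_on_le[OF injF imF assms(5)])
          then have cardF: "card F \<le> 1" using card1 by simp
          have conn: "connected (sphere 0 1 - F)" by (rule conn_punct[OF finF cardF])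
          have "connectedin circle_top (sphere 0 1 - F)"
            using conn by (simp add: circle_top_def connectedin_subtopology)
          then have cin: "connectedin X (e ` (sphere 0 1 - F))"
            by (rule connectedin_continuous_map_image[OF e(3)])
          have "e ` (sphere 0 1 - F) \<subseteq> u \<union> v" using c e(2) by blast
          moreover have "u \<inter> v \<inter> e ` (sphere 0 1 - F) = {}" by (auto simp: F_def)
          moreover have "u \<inter> e ` (sphere 0 1 - F) \<noteq> {}"
          proof -
            obtain s where "s \<in> sphere 0 1" "y = e s" using y e(2) by blast
            moreover have "y \<in> u" using y c by blast
            ultimately show ?thesis using y by (auto simp: F_def)
          qed
          moreover have "v \<inter> e ` (sphere 0 1 - F) \<noteq> {}"
          proof -
            obtain s where "s \<in> sphere 0 1" "x = e s" using x e(2) by blast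
            moreover have "x \<in> v" using x c by blast
            ultimately show ?thesis using x by (auto simp: F_def)
          qed
          ultimately show ?thesis
            using cin uclosed vclosed unfolding connectedin_closedin by blast
        qed
      qed
    qed
  next
    assume H: "\<forall>c. essential_scc X c \<and> c \<subseteq> u \<union> v \<longrightarrow> c = u \<or> c = v"
    show "card (u \<inter> v) \<le> 1"
    proof (rule ccontr)
      assume "\<not> card (u \<inter> v) \<le> 1"
      then have card2: "card (u \<inter> v) \<ge> 2" by simp
      define G where "G = {s \<in> sphere 0 1. g s \<in> u}"
      have gG: "g ` G = u \<inter> v" using g(2) by (auto simp: G_def)
      have injG: "inj_on g G" by (rule inj_on_subset[OF g(4)]) (auto simp: G_def)
      have finG: "finite G" by (rule inj_on_finite[OF injG]) (use gG assms(5) in auto)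
      have "card G = card (u \<inter> v)" using card_image[OF injG] gG by simp
      then have cG: "card G \<ge> 2" using card2 by simp
      then have "G \<noteq> {}" by auto
      then obtain q1 where q1: "q1 \<in> G" by blast
      have "\<not> G \<subseteq> {q1}"
      proof
        assume "G \<subseteq> {q1}"
        then have "card G \<le> card {q1}" by (intro card_mono) auto
        then show False using cG by simp
      qed
      then obtain q2 where q2: "q2 \<in> G" "q2 \<noteq> q1" by blast
      have q: "q1 \<in> G" "q2 \<in> G" "q1 \<noteq> q2" using q1 q2 by auto
      have Gs: "G \<subseteq> sphere 0 1" by (auto simp: G_def)
      obtain \<gamma> :: "real \<Rightarrow> real^2" where \<gamma>: "continuous_on {0..1} \<gamma>" "\<gamma> ` {0..1} \<subseteq> sphere 0 1" "inj_on \<gamma> {0..1}"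
        "\<gamma> 0 \<in> G" "\<gamma> 1 \<in> G" "\<forall>s. 0 < s \<and> s < 1 \<longrightarrow> \<gamma> s \<notin> G"
        using arc_exists[OF finG Gs q] by blast
      define \<beta> where "\<beta> = g \<circ> \<gamma>"
      have \<gamma>c: "continuous_map (top_of_set {0..1}) circle_top \<gamma>"
        using \<gamma>(1,2) by (auto simp: circle_top_def)
      have \<beta>c: "continuous_map (top_of_set {0..1}) X \<beta>"
        unfolding \<beta>_def by (rule continuous_map_compose[OF \<gamma>c g(3)])
      have \<beta>i: "inj_on \<beta> {0..1}"
        unfolding \<beta>_def by (rule comp_inj_on[OF \<gamma>(3) inj_on_subset[OF g(4) \<gamma>(2)]])
      have b0: "\<beta> 0 \<in> u" "\<beta> 1 \<in> u" using \<gamma>(4,5) by (auto simp: \<beta>_def G_def)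
      obtain r1 where hr1: "r1 \<in> sphere 0 1" "f r1 = \<beta> 0" using b0 f(2) by (metis imageE)
      obtain r2 where hr2: "r2 \<in> sphere 0 1" "f r2 = \<beta> 1" using b0 f(2) by (metis imageE)
      have "\<beta> 0 \<noteq> \<beta> 1" using inj_onD[OF \<beta>i, of 0 1] by auto
      then have r12: "r1 \<noteq> r2" using hr1 hr2 by auto
      interpret chord r1 r2 using hr1(1) hr2(1) r12 by unfold_locales
      have avoid: "\<And>s. 0 < s \<Longrightarrow> s < 1 \<Longrightarrow> \<beta> s \<notin> f ` sphere 0 1"
      proof -
        fix s :: real assume s: "0 < s" "s < 1"
        then have "\<gamma> s \<notin> G" using \<gamma>(6) by auto
        have "\<gamma> s \<in> sphere 0 1" using \<gamma>(2) s by (intro subsetD[OF \<gamma>(2)]) auto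
        note this \<open>\<gamma> s \<notin> G\<close>
        then show "\<beta> s \<notin> f ` sphere 0 1" using f(2) by (auto simp: \<beta>_def G_def)
      qed
      have injV: "inj_on f {x \<in> sphere 0 1. f x \<in> v}" by (rule inj_on_subset[OF f(4)]) auto
      have finV: "finite {x \<in> sphere 0 1. f x \<in> v}"
        by (rule inj_on_finite[OF injV _ assms(5)]) (use f(2) in auto)
      obtain e where e: "embedding_map circle_top X e" "e ` sphere 0 1 \<subseteq> f ` sphere 0 1 \<union> \<beta> ` {0..1}"
        "\<beta> (1/2) \<in> e ` sphere 0 1" "\<not> e ` sphere 0 1 \<subseteq> v"
        "\<not> (\<exists>a. homotopic_with (\<lambda>_. True) circle_top X e (\<lambda>_. a))"
        using key[OF Haus f(3,4) \<beta>c \<beta>i hr1(2) hr2(2) avoid finV f(5)] by blast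
      have "\<beta> ` {0..1} \<subseteq> v" using \<gamma>(2) g(2) by (auto simp: \<beta>_def)
      then have sub: "e ` sphere 0 1 \<subseteq> u \<union> v" using e(2) f(2) by blast
      have ess: "essential_scc X (e ` sphere 0 1)"
        unfolding essential_scc_def using e(1,5) by blast
      have "e ` sphere 0 1 = u \<or> e ` sphere 0 1 = v" using H ess sub by blast
      moreover have "e ` sphere 0 1 \<noteq> v" using e(4) by blast
      moreover have "\<beta> (1/2) \<notin> u" using avoid[of "1/2"] f(2) by simp
      ultimately show False using e(3) by blast
    qed
  qed
qed

end
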